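(* Let $G=(V,E,L)$ be a complete graph with loops, $n:=|V|$, whose set of plus loops is $L^+=\{\{j,j\}\}$ for some $j\in V$ (minus loops $L^-$ arbitrary). Introduce auxiliary variables $z_S$ for all $S\subseteq V$ with $|S|\ge3$. Then $\mathrm{QP}(G)$ equals the projection onto the coordinates $V\cup E\cup L$ of the set of all vectors satisfying $$z_{jj}\ \ge\sum_{J\subseteq V:\, j\in J}\frac{\big(\ell_n(J,V\setminus J)\big)^2}{\ell_{n-1}(J\setminus\{j\},V\setminus J)},\qquad \ell_n(J,V\setminus J)\ge0\ \ \forall J\subseteq V,$$ $$z_{ii}\le z_i,\quad z_i\in[0,1]\qquad\forall\{i,i\}\in L^-.$$
   Context: A graph with loops is $G=(V,E,L)$: $V$ finite node set, $E$ a set of unordered pairs of distinct nodes, $L$ a set of loops $\{i,i\}$ partitioned as $L=L^-\cup L^+$ (minus/plus loops); it is complete if $E$ contains all pairs of distinct nodes. $\mathrm{QP}(G):=\mathrm{conv}\{z\in\mathbb{R}^{V\cup E\cup L}: z_{ii}\ge z_i^2\ \forall\{i,i\}\in L^+,\ z_{ii}\le z_i^2\ \forall \{i,i\}\in L^-,\ z_{ij}=z_iz_j\ \forall \{i,j\}\in E,\ z_i\in[0,1]\ \forall i\in V\}$. For $S\subseteq V$: $z_\emptyset:=1$, $z_{\{k\}}:=z_k$, $z_{\{k,l\}}$ the edge variable, and $z_S$ auxiliary for $|S|\ge3$ (loop variables $z_{ii}$ are distinct). For disjoint $J_1,J_2$ with $|J_1\cup J_2|=d$, $\ell_d(J_1,J_2):=\sum_{t\subseteq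 J_2}(-1)^{|t|}z_{J_1\cup t}$. Each $u^2/v$ denotes the closed perspective: $u^2/v$ if $v>0$, $0$ if $u=v=0$, $+\infty$ if $u\ne0,v=0$. *)

theory Defs
  imports "HOL-Analysis.Analysis" "HOL-Library.Function_Algebras"
begin

instantiation "fun" :: (type, real_vector) real_vector
begin
definition scaleR_fun :: "real \<Rightarrow> ('a \<Rightarrow> 'b) \<Rightarrow> 'a \<Rightarrow> 'b"
  where "scaleR_fun r f = (\<lambda>x. r *\<^sub>R f x)"
instance
  by standard (auto simp: scaleR_fun_def fun_eq_iff plus_fun_def scaleR_add_right scaleR_add_left)
end

text \<open>A point of R^(V \<union> E \<union> L) is a real function on coordinates; coordinates are
nodes i, edges {k,l} (unordered pairs of distinct nodes, as 2-element sets) and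
loops {i,i} (indexed by the node i).  Coordinates outside V \<union> E \<union> L are required
to be 0, so such functions are exactly the points of R^(V \<union> E \<union> L).\<close>

datatype 'a coord = Node 'a | Edge "'a set" | Loop 'a

text \<open>Complete graph on V: E = all 2-element subsets of V. Loops are given by the set
of nodes carrying a loop; Lm = minus loops, Lp = plus loops.\<close>

definition edges_complete :: "'a set \<Rightarrow> 'a set set" where
  "edges_complete V = {e. e \<subseteq> V \<and> card e = 2}"

definition coords :: "'a set \<Rightarrow> 'a set \<Rightarrow> 'a set \<Rightarrow> 'a coord set" where
  "coords V Lm Lp = Node ` V \<union> Edge ` edges_complete V \<union> Loop ` (Lm \<union> Lp)"

definition supported_on :: "'c set \<Rightarrow> ('c \<Rightarrow> real) \<Rightarrow> bool" where
  "supported_on C z \<longleftrightarrow> (\<forall>c. c \<notin> C \<longrightarrow> z c = 0)"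

definition QP :: "'a set \<Rightarrow> 'a set \<Rightarrow> 'a set \<Rightarrow> ('a coord \<Rightarrow> real) set" where
  "QP V Lm Lp = convex hull
     {z. supported_on (coords V Lm Lp) z
       \<and> (\<forall>i\<in>Lp. z (Loop i) \<ge> (z (Node i))\<^sup>2)
       \<and> (\<forall>i\<in>Lm. z (Loop i) \<le> (z (Node i))\<^sup>2)
       \<and> (\<forall>e\<in>edges_complete V. \<forall>k l. e = {k, l} \<longrightarrow> z (Edge e) = z (Node k) * z (Node l))
       \<and> (\<forall>i\<in>V. 0 \<le> z (Node i) \<and> z (Node i) \<le> 1)}"

definition zS :: "('a coord \<Rightarrow> real) \<Rightarrow> ('a set \<Rightarrow> real) \<Rightarrow> 'a set \<Rightarrow> real" where
  "zS z a S = (if S = {} then 1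
               else if card S = 1 then z (Node (the_elem S))
               else if card S = 2 then z (Edge S)
               else a S)"

text \<open>\<ell>_d(J1,J2) = \<Sum>_{t \<subseteq> J2} (-1)^|t| z_{J1 \<union> t}  (d = |J1 \<union> J2| is only a label).\<close>

definition ell :: "('a coord \<Rightarrow> real) \<Rightarrow> ('a set \<Rightarrow> real) \<Rightarrow> 'a set \<Rightarrow> 'a set \<Rightarrow> real" where
  "ell z a J1 J2 = (\<Sum>t\<in>Pow J2. (-1) ^ card t * zS z a (J1 \<union> t))"

text \<open>Closed perspective u^2/v: u^2/v if v > 0, 0 if u = v = 0, +\<infinity> otherwise
(the case v < 0 never arises under the constraints \<ell>_n \<ge> 0; we set it to +\<infinity>).\<close>

definition persp :: "real \<Rightarrow> real \<Rightarrow> ereal" where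
  "persp u v = (if v > 0 then ereal (u\<^sup>2 / v) else if u = 0 \<and> v = 0 then 0 else \<infinity>)"

end

theory Submission
  imports Defs
begin

lemma sum_fun_apply: "finite A \<Longrightarrow> (sum f A) c = (\<Sum>k\<in>A. (f k) c)"
  for f :: "'b \<Rightarrow> 'c \<Rightarrow> real"
  by (induction A rule: finite_induct) (auto simp: zero_fun_def plus_fun_def)

lemma split_pow:
  assumes "finite X" "j \<notin> X"
  shows "(\<Sum>J\<in>Pow (insert j X). g J) = (\<Sum>K\<in>Pow X. g (insert j K) + g K)"
proof -
  have inj: "inj_on (insert j) (Pow X)"
    using assms(2) by (auto simp: inj_on_def)
  have disj: "Pow X \<inter> insert j ` Pow X = {}" using assms(2) by auto
  have "(\<Sum>J\<in>Pow (insert j X). g J) = (\<Sum>J\<in>Pow X. g J) + (\<Sum>J\<in>insert j ` Pow X. g J)"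
    unfolding Pow_insert using assms(1) disj by (intro sum.union_disjoint) auto
  also have "(\<Sum>J\<in>insert j ` Pow X. g J) = (\<Sum>K\<in>Pow X. g (insert j K))"
    using inj by (simp add: sum.reindex)
  finally show ?thesis by (simp add: sum.distrib add.commute)
qed

lemma mobius:
  fixes f :: "'a set \<Rightarrow> real"
  assumes "finite V" "S \<subseteq> V"
  shows "(\<Sum>J\<in>Pow V. if S \<subseteq> J then (\<Sum>t\<in>Pow (V - J). (-1) ^ card t * f (J \<union> t)) else 0) = f S"
  using assms
proof (induction V arbitrary: S f rule: finite_induct)
  case empty
  then show ?case by simp
next
  case (insert x W)
  define fx where "fx U = f (insert x U)" for U
  define g where "g h K = (\<Sum>t\<in>Pow (W - K). (-1::real) ^ card t * h (K \<union> t))" for h K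
  have e1: "(\<Sum>t\<in>Pow (insert x W - insert x K). (-1) ^ card t * f (insert x K \<union> t)) = g fx K"
    if "K \<in> Pow W" for K
    using that insert by (auto simp: g_def fx_def intro!: sum.cong arg_cong[where f=f])
  have e2: "(\<Sum>t\<in>Pow (insert x W - K). (-1) ^ card t * f (K \<union> t)) = g f K - g fx K"
    if "K \<in> Pow W" for K
  proof -
    have "insert x W - K = insert x (W - K)" using that insert by auto
    moreover have "(\<Sum>t\<in>Pow (insert x (W - K)). (-1::real) ^ card t * f (K \<union> t))
      = (\<Sum>t\<in>Pow (W - K). (-1) ^ card (insert x t) * f (K \<union> insert x t) + (-1) ^ card t * f (K \<union> t))"
      using insert by (intro split_pow) auto
    moreover have "\<dots> = (\<Sum>t\<in>Pow (W - K). - ((-1) ^ card t * fx (K \<union> t)) + (-1) ^ card t * f (K \<union> t))"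
    proof (intro sum.cong refl)
      fix t assume t: "t \<in> Pow (W - K)"
      then have "t \<subseteq> W" by auto
      then have "finite t" "x \<notin> t" using insert(1,2) finite_subset by auto
      then show "(-1::real) ^ card (insert x t) * f (K \<union> insert x t) + (-1) ^ card t * f (K \<union> t)
          = - ((-1) ^ card t * fx (K \<union> t)) + (-1) ^ card t * f (K \<union> t)"
        by (simp add: fx_def)
    qed
    ultimately show ?thesis by (simp add: g_def sum.distrib sum_negf sum_subtractf)
  qed
  have "(\<Sum>J\<in>Pow (insert x W). if S \<subseteq> J then (\<Sum>t\<in>Pow (insert x W - J). (-1) ^ card t * f (J \<union> t)) else 0)
     = (\<Sum>K\<in>Pow W. (if S \<subseteq> insert x K then g fx K else 0) + (if S \<subseteq> K then g f K - g fx K else 0))"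
    using insert e1 e2 by (subst split_pow) (auto intro!: sum.cong)
  also have "\<dots> = f S"
  proof (cases "x \<in> S")
    case True
    have "(\<Sum>K\<in>Pow W. (if S \<subseteq> insert x K then g fx K else 0) + (if S \<subseteq> K then g f K - g fx K else 0))
       = (\<Sum>K\<in>Pow W. if S - {x} \<subseteq> K then g fx K else 0)"
      using True insert by (intro sum.cong refl) auto
    also have "\<dots> = fx (S - {x})" unfolding g_def
      using insert by (intro insert.IH) auto
    finally show ?thesis using True by (simp add: fx_def insert_absorb)
  next
    case False
    have "(\<Sum>K\<in>Pow W. (if S \<subseteq> insert x K then g fx K else 0) + (if S \<subseteq> K then g f K - g fx K else 0))
       = (\<Sum>K\<in>Pow W. if S \<subseteq> K then g f K else 0)"
      using False by (intro sum.cong refl) (auto simp: subset_insert)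
    also have "\<dots> = f S" unfolding g_def
      using insert False by (intro insert.IH) auto
    finally show ?thesis .
  qed
  finally show ?case .
qed

lemma ell_mobius:
  assumes "finite V" "S \<subseteq> V"
  shows "(\<Sum>J\<in>Pow V. if S \<subseteq> J then ell z a J (V - J) else 0) = zS z a S"
  unfolding ell_def using mobius[OF assms, of "zS z a"] by simp

lemma ell_minus:
  assumes "finite V" "j \<in> J" "J \<subseteq> V"
  shows "ell z a (J - {j}) (V - J) = ell z a J (V - J) + ell z a (J - {j}) (V - (J - {j}))"
proof -
  have fin: "finite (V - J)" using assms by auto
  have "V - (J - {j}) = insert j (V - J)" using assms by auto
  then have "ell z a (J - {j}) (V - (J - {j}))
    = (\<Sum>t\<in>Pow (V - J). (-1) ^ card (insert j t) * zS z a (J - {j} \<union> insert j t)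
          + (-1) ^ card t * zS z a (J - {j} \<union> t))"
    unfolding ell_def using fin assms(2) split_pow[of "V - J" j "\<lambda>t. (-1) ^ card t * zS z a (J - {j} \<union> t)"]
    by simp
  also have "\<dots> = (\<Sum>t\<in>Pow (V - J). - ((-1) ^ card t * zS z a (J \<union> t))
          + (-1) ^ card t * zS z a (J - {j} \<union> t))"
  proof (intro sum.cong refl)
    fix t assume "t \<in> Pow (V - J)"
    then have "t \<subseteq> V - J" by auto
    then have "finite t" "j \<notin> t" "J - {j} \<union> insert j t = J \<union> t"
      using fin assms finite_subset[of t "V - J"] by auto
    then show "(-1::real) ^ card (insert j t) * zS z a (J - {j} \<union> insert j t)
          + (-1) ^ card t * zS z a (J - {j} \<union> t) = - ((-1) ^ card t * zS z a (J \<union> t))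
          + (-1) ^ card t * zS z a (J - {j} \<union> t)" by simp
  qed
  also have "\<dots> = - ell z a J (V - J) + ell z a (J - {j}) (V - J)"
    unfolding ell_def by (simp add: sum.distrib sum_negf sum_subtractf)
  finally show ?thesis by simp
qed

lemma alt_prod:
  fixes y :: "'a \<Rightarrow> real"
  assumes "finite A"
  shows "(\<Sum>t\<in>Pow A. (-1) ^ card t * (\<Prod>i\<in>t. y i)) = (\<Prod>i\<in>A. 1 - y i)"
proof -
  have "(\<Prod>i\<in>A. 1 - y i) = (\<Prod>i\<in>A. (- y i) + 1)" by simp
  also have "\<dots> = (\<Sum>X\<in>Pow A. (\<Prod>x\<in>X. - y x) * (\<Prod>x\<in>A-X. 1))"
    by (rule prod_add[OF assms])
  also have "\<dots> = (\<Sum>t\<in>Pow A. (-1) ^ card t * (\<Prod>i\<in>t. y i))"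
    by (intro sum.cong refl) (simp add: prod_uminus)
  finally show ?thesis by simp
qed

lemma ell_prod:
  fixes y :: "'a \<Rightarrow> real"
  assumes "finite V" "J \<subseteq> V" "\<And>S. S \<subseteq> V \<Longrightarrow> zS z a S = (\<Prod>i\<in>S. y i)"
  shows "ell z a J (V - J) = (\<Prod>i\<in>J. y i) * (\<Prod>i\<in>V - J. 1 - y i)"
proof -
  have fJ: "finite J" using assms finite_subset by auto
  have "ell z a J (V - J) = (\<Sum>t\<in>Pow (V - J). (\<Prod>i\<in>J. y i) * ((-1) ^ card t * (\<Prod>i\<in>t. y i)))"
    unfolding ell_def
  proof (intro sum.cong refl)
    fix t assume t: "t \<in> Pow (V - J)"
    then have "t \<subseteq> V" by auto
    then have "finite t" "J \<inter> t = {}" "J \<union> t \<subseteq> V" using t assms finite_subset by auto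
    then show "(-1) ^ card t * zS z a (J \<union> t) = (\<Prod>i\<in>J. y i) * ((-1) ^ card t * (\<Prod>i\<in>t. y i))"
      using assms(3) fJ by (simp add: prod.union_disjoint)
  qed
  also have "\<dots> = (\<Prod>i\<in>J. y i) * (\<Prod>i\<in>V - J. 1 - y i)"
    by (simp add: sum_distrib_left[symmetric] alt_prod assms)
  finally show ?thesis .
qed

lemma zS_lin:
  assumes "s + t = 1"
  shows "zS (s *\<^sub>R z1 + t *\<^sub>R z2) (\<lambda>S. s * a1 S + t * a2 S) S = s * zS z1 a1 S + t * zS z2 a2 S"
  using assms by (simp add: zS_def scaleR_fun_def plus_fun_def)

lemma ell_lin:
  assumes "s + t = 1"
  shows "ell (s *\<^sub>R z1 + t *\<^sub>R z2) (\<lambda>S. s * a1 S + t * a2 S) J1 J2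
     = s * ell z1 a1 J1 J2 + t * ell z2 a2 J1 J2"
  unfolding ell_def zS_lin[OF assms]
  by (simp add: sum_distrib_left sum.distrib algebra_simps)

definition pf :: "real \<Rightarrow> real \<Rightarrow> real" where
  "pf u v = (if v > 0 then u\<^sup>2 / v else 0)"

lemma persp_pf: "0 \<le> u \<Longrightarrow> u \<le> v \<Longrightarrow> persp u v = ereal (pf u v)"
  by (auto simp: persp_def pf_def)

lemma pf_scale: "0 \<le> s \<Longrightarrow> s * pf u v = pf (s * u) (s * v)"
proof (cases "s = 0")
  case False
  assume "0 \<le> s"
  then have "s > 0" using False by simp
  then show ?thesis
    by (simp add: pf_def zero_less_mult_iff power2_eq_square)
qed (simp add: pf_def)

lemma pf_ineq:
  fixes a b c d :: real
  assumes "0 < c" "0 < d"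
  shows "(a + b)\<^sup>2 / (c + d) \<le> a\<^sup>2 / c + b\<^sup>2 / d"
proof -
  have "a\<^sup>2 / c + b\<^sup>2 / d - (a + b)\<^sup>2 / (c + d) = (a * d - b * c)\<^sup>2 / (c * d * (c + d))"
    using assms by (simp add: field_simps power2_eq_square)
  also have "\<dots> \<ge> 0" using assms by simp
  finally show ?thesis by simp
qed

lemma pf_subadd:
  assumes "0 \<le> a" "a \<le> c" "0 \<le> b" "b \<le> d"
  shows "pf (a + b) (c + d) \<le> pf a c + pf b d"
proof -
  consider "c = 0" | "d = 0" | "c > 0" "d > 0" using assms by linarith
  then show ?thesis
  proof cases
    case 1
    then have "a = 0" using assms by simp
    then show ?thesis using 1 by (simp add: pf_def)
  next
    case 2
    then have "b = 0" using assms by simp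
    then show ?thesis using 2 by (simp add: pf_def)
  next
    case 3
    then show ?thesis using pf_ineq[OF 3, of a b] by (simp add: pf_def add_pos_pos)
  qed
qed

lemma pf_convex:
  assumes "0 \<le> u1" "u1 \<le> v1" "0 \<le> u2" "u2 \<le> v2" "0 \<le> s" "0 \<le> t"
  shows "pf (s * u1 + t * u2) (s * v1 + t * v2) \<le> s * pf u1 v1 + t * pf u2 v2"
  unfolding pf_scale[OF assms(5)] pf_scale[OF assms(6)]
  using assms by (intro pf_subadd) (auto intro: mult_left_mono)


definition RHS :: "'a set \<Rightarrow> 'a set \<Rightarrow> 'a \<Rightarrow> ('a coord \<Rightarrow> real) set" where
  "RHS V Lm j = {z. supported_on (coords V Lm {j}) z \<and>
        (\<exists>a :: 'a set \<Rightarrow> real.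
           ereal (z (Loop j)) \<ge>
             (\<Sum>J\<in>{J. J \<subseteq> V \<and> j \<in> J}. persp (ell z a J (V - J)) (ell z a (J - {j}) (V - J)))
         \<and> (\<forall>J. J \<subseteq> V \<longrightarrow> ell z a J (V - J) \<ge> 0)
         \<and> (\<forall>i\<in>Lm. z (Loop i) \<le> z (Node i) \<and> 0 \<le> z (Node i) \<and> z (Node i) \<le> 1))}"

definition psum :: "'a set \<Rightarrow> 'a \<Rightarrow> ('a coord \<Rightarrow> real) \<Rightarrow> ('a set \<Rightarrow> real) \<Rightarrow> real" where
  "psum V j z a = (\<Sum>K\<in>Pow (V - {j}). pf (ell z a (insert j K) (V - insert j K))
      (ell z a (insert j K) (V - insert j K) + ell z a K (V - K)))"

lemma sum_char:
  assumes "finite V" "j \<in> V" "\<forall>J. J \<subseteq> V \<longrightarrow> ell z a J (V - J) \<ge> 0"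
  shows "(\<Sum>J\<in>{J. J \<subseteq> V \<and> j \<in> J}. persp (ell z a J (V - J)) (ell z a (J - {j}) (V - J)))
    = ereal (psum V j z a)"
proof -
  have eq: "{J. J \<subseteq> V \<and> j \<in> J} = insert j ` Pow (V - {j})"
  proof (rule set_eqI, rule iffI)
    fix J assume "J \<in> {J. J \<subseteq> V \<and> j \<in> J}"
    then show "J \<in> insert j ` Pow (V - {j})" by (intro image_eqI[of _ _ "J - {j}"]) auto
  next
    fix J assume "J \<in> insert j ` Pow (V - {j})"
    then show "J \<in> {J. J \<subseteq> V \<and> j \<in> J}" using assms(2) by auto
  qed
  have inj: "inj_on (insert j) (Pow (V - {j}))" by (auto simp: inj_on_def)
  have "(\<Sum>J\<in>{J. J \<subseteq> V \<and> j \<in> J}. persp (ell z a J (V - J)) (ell z a (J - {j}) (V - J)))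
     = (\<Sum>K\<in>Pow (V - {j}). persp (ell z a (insert j K) (V - insert j K)) (ell z a (insert j K - {j}) (V - insert j K)))"
    unfolding eq using inj by (simp add: sum.reindex)
  also have "\<dots> = (\<Sum>K\<in>Pow (V - {j}). ereal (pf (ell z a (insert j K) (V - insert j K))
      (ell z a (insert j K) (V - insert j K) + ell z a K (V - K))))"
  proof (intro sum.cong refl)
    fix K assume K: "K \<in> Pow (V - {j})"
    then have K1: "insert j K - {j} = K" "V - (insert j K - {j}) = V - K" and Kin: "insert j K \<subseteq> V"
      using assms(2) by auto
    have m: "ell z a K (V - insert j K) = ell z a (insert j K) (V - insert j K) + ell z a K (V - K)"
      using ell_minus[OF assms(1) insertI1 Kin, of z a] unfolding K1 .
    have n: "0 \<le> ell z a (insert j K) (V - insert j K)" "0 \<le> ell z a K (V - K)"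
      using assms(3) Kin K by auto
    show "persp (ell z a (insert j K) (V - insert j K)) (ell z a (insert j K - {j}) (V - insert j K))
      = ereal (pf (ell z a (insert j K) (V - insert j K)) (ell z a (insert j K) (V - insert j K) + ell z a K (V - K)))"
      unfolding K1(1) m using n by (intro persp_pf) auto
  qed
  finally show ?thesis by (simp add: psum_def)
qed

lemma mem_RHS:
  assumes "finite V" "j \<in> V"
  shows "z \<in> RHS V Lm j \<longleftrightarrow> supported_on (coords V Lm {j}) z \<and>
    (\<exists>a. psum V j z a \<le> z (Loop j) \<and> (\<forall>J. J \<subseteq> V \<longrightarrow> ell z a J (V - J) \<ge> 0)
         \<and> (\<forall>i\<in>Lm. z (Loop i) \<le> z (Node i) \<and> 0 \<le> z (Node i) \<and> z (Node i) \<le> 1))"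
proof
  assume "z \<in> RHS V Lm j"
  then obtain a where A: "ereal (z (Loop j)) \<ge>
             (\<Sum>J\<in>{J. J \<subseteq> V \<and> j \<in> J}. persp (ell z a J (V - J)) (ell z a (J - {j}) (V - J)))"
    "\<forall>J. J \<subseteq> V \<longrightarrow> ell z a J (V - J) \<ge> 0"
    "\<forall>i\<in>Lm. z (Loop i) \<le> z (Node i) \<and> 0 \<le> z (Node i) \<and> z (Node i) \<le> 1"
    and S: "supported_on (coords V Lm {j}) z" unfolding RHS_def by blast
  then have "psum V j z a \<le> z (Loop j)" using sum_char[OF assms A(2)] by simp
  then show "supported_on (coords V Lm {j}) z \<and>
    (\<exists>a. psum V j z a \<le> z (Loop j) \<and> (\<forall>J. J \<subseteq> V \<longrightarrow> ell z a J (V - J) \<ge> 0)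
         \<and> (\<forall>i\<in>Lm. z (Loop i) \<le> z (Node i) \<and> 0 \<le> z (Node i) \<and> z (Node i) \<le> 1))"
    using A S by blast
next
  assume "supported_on (coords V Lm {j}) z \<and>
    (\<exists>a. psum V j z a \<le> z (Loop j) \<and> (\<forall>J. J \<subseteq> V \<longrightarrow> ell z a J (V - J) \<ge> 0)
         \<and> (\<forall>i\<in>Lm. z (Loop i) \<le> z (Node i) \<and> 0 \<le> z (Node i) \<and> z (Node i) \<le> 1))"
  then obtain a where S: "supported_on (coords V Lm {j}) z" and A: "psum V j z a \<le> z (Loop j)"
    "\<forall>J. J \<subseteq> V \<longrightarrow> ell z a J (V - J) \<ge> 0"
    "\<forall>i\<in>Lm. z (Loop i) \<le> z (Node i) \<and> 0 \<le> z (Node i) \<and> z (Node i) \<le> 1" by blast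
  then have "ereal (z (Loop j)) \<ge>
             (\<Sum>J\<in>{J. J \<subseteq> V \<and> j \<in> J}. persp (ell z a J (V - J)) (ell z a (J - {j}) (V - J)))"
    using sum_char[OF assms A(2)] by simp
  then show "z \<in> RHS V Lm j" unfolding RHS_def using S A by blast
qed

lemma mob_split:
  assumes "finite V" "j \<in> V" "S \<subseteq> V"
  shows "(\<Sum>K\<in>Pow (V - {j}). (if S \<subseteq> insert j K then ell z a (insert j K) (V - insert j K) else 0)
     + (if S \<subseteq> K then ell z a K (V - K) else 0)) = zS z a S"
proof -
  have "zS z a S = (\<Sum>J\<in>Pow V. if S \<subseteq> J then ell z a J (V - J) else 0)"
    using ell_mobius[OF assms(1,3)] by simp
  also have "\<dots> = (\<Sum>J\<in>Pow (insert j (V - {j})). if S \<subseteq> J then ell z a J (V - J) else 0)"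
    using assms(2) by (simp add: insert_absorb)
  also have "\<dots> = (\<Sum>K\<in>Pow (V - {j}). (if S \<subseteq> insert j K then ell z a (insert j K) (V - insert j K) else 0)
     + (if S \<subseteq> K then ell z a K (V - K) else 0))"
    using assms(1) by (intro split_pow) auto
  finally show ?thesis by simp
qed

lemma RHS_convex:
  assumes "finite V" "j \<in> V"
  shows "convex (RHS V Lm j)"
proof (rule convexI)
  fix z1 z2 :: "'a coord \<Rightarrow> real" and u v :: real
  assume z1: "z1 \<in> RHS V Lm j" and z2: "z2 \<in> RHS V Lm j" and uv: "0 \<le> u" "0 \<le> v" "u + v = 1"
  obtain a1 where s1: "supported_on (coords V Lm {j}) z1" and p1: "psum V j z1 a1 \<le> z1 (Loop j)"
    and n1: "\<forall>J. J \<subseteq> V \<longrightarrow> ell z1 a1 J (V - J) \<ge> 0"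
    and m1: "\<forall>i\<in>Lm. z1 (Loop i) \<le> z1 (Node i) \<and> 0 \<le> z1 (Node i) \<and> z1 (Node i) \<le> 1"
    using z1 mem_RHS[OF assms] by blast
  obtain a2 where s2: "supported_on (coords V Lm {j}) z2" and p2: "psum V j z2 a2 \<le> z2 (Loop j)"
    and n2: "\<forall>J. J \<subseteq> V \<longrightarrow> ell z2 a2 J (V - J) \<ge> 0"
    and m2: "\<forall>i\<in>Lm. z2 (Loop i) \<le> z2 (Node i) \<and> 0 \<le> z2 (Node i) \<and> z2 (Node i) \<le> 1"
    using z2 mem_RHS[OF assms] by blast
  define z where "z = u *\<^sub>R z1 + v *\<^sub>R z2"
  define a where "a = (\<lambda>S. u * a1 S + v * a2 S)"
  have zc: "z c = u * z1 c + v * z2 c" for c by (simp add: z_def scaleR_fun_def plus_fun_def)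
  have L: "ell z a J1 J2 = u * ell z1 a1 J1 J2 + v * ell z2 a2 J1 J2" for J1 J2
    unfolding z_def a_def by (rule ell_lin[OF uv(3)])
  have "supported_on (coords V Lm {j}) z" using s1 s2 by (simp add: supported_on_def zc)
  moreover have "\<forall>J. J \<subseteq> V \<longrightarrow> ell z a J (V - J) \<ge> 0" using n1 n2 uv by (simp add: L)
  moreover have "\<forall>i\<in>Lm. z (Loop i) \<le> z (Node i) \<and> 0 \<le> z (Node i) \<and> z (Node i) \<le> 1"
  proof
    fix i assume "i \<in> Lm"
    then have A: "z1 (Loop i) \<le> z1 (Node i)" "0 \<le> z1 (Node i)" "z1 (Node i) \<le> 1"
      "z2 (Loop i) \<le> z2 (Node i)" "0 \<le> z2 (Node i)" "z2 (Node i) \<le> 1" using m1 m2 by auto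
    have "u * z1 (Loop i) \<le> u * z1 (Node i)" "v * z2 (Loop i) \<le> v * z2 (Node i)"
      "u * z1 (Node i) \<le> u" "v * z2 (Node i) \<le> v"
      using A uv by (auto intro: mult_left_mono mult_left_le)
    then show "z (Loop i) \<le> z (Node i) \<and> 0 \<le> z (Node i) \<and> z (Node i) \<le> 1"
      using A uv by (simp add: zc)
  qed
  moreover have "psum V j z a \<le> z (Loop j)"
  proof -
    have "psum V j z a \<le> u * psum V j z1 a1 + v * psum V j z2 a2"
      unfolding psum_def sum_distrib_left sum.distrib[symmetric]
    proof (rule sum_mono)
      fix K assume K: "K \<in> Pow (V - {j})"
      then have "insert j K \<subseteq> V" "K \<subseteq> V" using assms by auto
      then have nn: "0 \<le> ell z1 a1 (insert j K) (V - insert j K)" "0 \<le> ell z1 a1 K (V - K)"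
        "0 \<le> ell z2 a2 (insert j K) (V - insert j K)" "0 \<le> ell z2 a2 K (V - K)" using n1 n2 by auto
      define A1 where "A1 = ell z1 a1 (insert j K) (V - insert j K)"
      define A2 where "A2 = ell z2 a2 (insert j K) (V - insert j K)"
      define B1 where "B1 = A1 + ell z1 a1 K (V - K)"
      define B2 where "B2 = A2 + ell z2 a2 K (V - K)"
      have c: "pf (u * A1 + v * A2) (u * B1 + v * B2) \<le> u * pf A1 B1 + v * pf A2 B2"
        by (rule pf_convex) (use nn uv in \<open>auto simp: A1_def A2_def B1_def B2_def\<close>)
      have e1: "ell z a (insert j K) (V - insert j K) = u * A1 + v * A2"
        by (simp add: L A1_def A2_def)
      have e2: "ell z a (insert j K) (V - insert j K) + ell z a K (V - K) = u * B1 + v * B2"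
        by (simp add: L A1_def A2_def B1_def B2_def algebra_simps)
      show "pf (ell z a (insert j K) (V - insert j K)) (ell z a (insert j K) (V - insert j K) + ell z a K (V - K))
        \<le> u * pf (ell z1 a1 (insert j K) (V - insert j K)) (ell z1 a1 (insert j K) (V - insert j K) + ell z1 a1 K (V - K))
        + v * pf (ell z2 a2 (insert j K) (V - insert j K)) (ell z2 a2 (insert j K) (V - insert j K) + ell z2 a2 K (V - K))"
        unfolding e2 unfolding e1 using c by (simp only: A1_def A2_def B1_def B2_def)
    qed
    also have "\<dots> \<le> u * z1 (Loop j) + v * z2 (Loop j)"
      using p1 p2 uv by (intro add_mono mult_left_mono) auto
    finally show ?thesis by (simp add: zc)
  qed
  ultimately show "u *\<^sub>R z1 + v *\<^sub>R z2 \<in> RHS V Lm j"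
    unfolding z_def[symmetric] using mem_RHS[OF assms] by blast
qed


lemma gen_RHS:
  assumes fin: "finite V" and jV: "j \<in> V" and LmV: "Lm \<subseteq> V"
    and sup: "supported_on (coords V Lm {j}) x"
    and pl: "\<forall>i\<in>{j}. x (Loop i) \<ge> (x (Node i))\<^sup>2"
    and ml: "\<forall>i\<in>Lm. x (Loop i) \<le> (x (Node i))\<^sup>2"
    and ed: "\<forall>e\<in>edges_complete V. \<forall>k l. e = {k, l} \<longrightarrow> x (Edge e) = x (Node k) * x (Node l)"
    and bx: "\<forall>i\<in>V. 0 \<le> x (Node i) \<and> x (Node i) \<le> 1"
  shows "x \<in> RHS V Lm j"
proof -
  define y where "y i = x (Node i)" for i
  define a where "a S = (\<Prod>i\<in>S. y i)" for S
  have zSp: "zS x a S = (\<Prod>i\<in>S. y i)" if S: "S \<subseteq> V" for S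
  proof -
    consider "S = {}" | "card S = 1" | "card S = 2" | "S \<noteq> {}" "card S \<noteq> 1" "card S \<noteq> 2" by blast
    then show ?thesis
    proof cases
      case 1 then show ?thesis by (simp add: zS_def)
    next
      case 2
      then obtain k where k: "S = {k}" by (metis card_1_singletonE)
      then show ?thesis by (simp add: zS_def y_def)
    next
      case 3
      then obtain k l where kl: "S = {k, l}" "k \<noteq> l" by (auto simp: card_2_iff)
      then have "S \<in> edges_complete V" using S 3 by (simp add: edges_complete_def)
      then have "x (Edge S) = y k * y l" using ed kl by (simp add: y_def)
      then show ?thesis using 3 kl by (simp add: zS_def)
    next
      case 4 then show ?thesis by (simp add: zS_def a_def)
    qed
  qed
  have Lp: "ell x a J (V - J) = (\<Prod>i\<in>J. y i) * (\<Prod>i\<in>V - J. 1 - y i)" if "J \<subseteq> V" for J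
    using ell_prod[OF fin that zSp] by simp
  have y01: "0 \<le> y i" "y i \<le> 1" if "i \<in> V" for i using bx that by (auto simp: y_def)
  have nn: "\<forall>J. J \<subseteq> V \<longrightarrow> ell x a J (V - J) \<ge> 0"
  proof (intro allI impI)
    fix J assume J: "J \<subseteq> V"
    have "0 \<le> (\<Prod>i\<in>J. y i)" using J y01 by (intro prod_nonneg) auto
    moreover have "0 \<le> (\<Prod>i\<in>V - J. 1 - y i)" using y01 by (intro prod_nonneg) auto
    ultimately show "ell x a J (V - J) \<ge> 0" using Lp[OF J] by simp
  qed
  define P where "P K = (\<Prod>i\<in>K. y i) * (\<Prod>i\<in>V - {j} - K. 1 - y i)" for K
  have PK: "ell x a (insert j K) (V - insert j K) = y j * P K"
       "ell x a K (V - K) = (1 - y j) * P K" "0 \<le> P K" if K: "K \<in> Pow (V - {j})" for K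
  proof -
    have fK: "finite K" "j \<notin> K" "insert j K \<subseteq> V" "K \<subseteq> V" using K fin jV finite_subset[of K V] by auto
    have e1: "V - insert j K = V - {j} - K" by auto
    have e2: "V - K = insert j (V - {j} - K)" using fK jV by auto
    show "ell x a (insert j K) (V - insert j K) = y j * P K"
      using Lp[OF fK(3)] fK unfolding e1 P_def by simp
    show "ell x a K (V - K) = (1 - y j) * P K"
      using Lp[OF fK(4)] fin unfolding e2 P_def by simp
    have "0 \<le> (\<Prod>i\<in>K. y i)" using fK y01 by (intro prod_nonneg) auto
    moreover have "0 \<le> (\<Prod>i\<in>V - {j} - K. 1 - y i)" using y01 by (intro prod_nonneg) auto
    ultimately show "0 \<le> P K" by (simp add: P_def)
  qed
  have sumP: "(\<Sum>K\<in>Pow (V - {j}). P K) = 1"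
  proof -
    have "(\<Sum>K\<in>Pow (V - {j}). P K) = (\<Sum>K\<in>Pow (V - {j}). (if {} \<subseteq> insert j K then ell x a (insert j K) (V - insert j K) else 0)
     + (if {} \<subseteq> K then ell x a K (V - K) else 0))"
      using PK by (intro sum.cong refl) (simp add: algebra_simps)
    also have "\<dots> = zS x a {}" by (rule mob_split[OF fin jV]) simp
    finally show ?thesis by (simp add: zS_def)
  qed
  have "psum V j x a = (\<Sum>K\<in>Pow (V - {j}). (y j)\<^sup>2 * P K)"
    unfolding psum_def
  proof (intro sum.cong refl)
    fix K assume K: "K \<in> Pow (V - {j})"
    show "pf (ell x a (insert j K) (V - insert j K)) (ell x a (insert j K) (V - insert j K) + ell x a K (V - K))
      = (y j)\<^sup>2 * P K"
      using PK[OF K] by (auto simp: pf_def power2_eq_square algebra_simps)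
  qed
  also have "\<dots> = (y j)\<^sup>2" by (simp add: sum_distrib_left[symmetric] sumP)
  also have "\<dots> \<le> x (Loop j)" using pl by (simp add: y_def)
  finally have ps: "psum V j x a \<le> x (Loop j)" .
  have "\<forall>i\<in>Lm. x (Loop i) \<le> x (Node i) \<and> 0 \<le> x (Node i) \<and> x (Node i) \<le> 1"
  proof
    fix i assume i: "i \<in> Lm"
    then have "i \<in> V" using LmV by auto
    then have "0 \<le> y i" "y i \<le> 1" using y01 by auto
    then have "(y i)\<^sup>2 \<le> y i" by (simp add: power2_eq_square mult_left_le)
    then show "x (Loop i) \<le> x (Node i) \<and> 0 \<le> x (Node i) \<and> x (Node i) \<le> 1"
      using ml i \<open>0 \<le> y i\<close> \<open>y i \<le> 1\<close> by (auto simp: y_def)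
  qed
  then show ?thesis using mem_RHS[OF fin jV] sup ps nn by blast
qed


lemma ind_prod:
  "finite S \<Longrightarrow> (\<Prod>i\<in>S. if i \<in> K then 1 else 0 :: real) = (if S \<subseteq> K then 1 else 0)"
  by (induction S rule: finite_induct) auto

lemma prod_q:
  fixes l1 l0 :: real
  assumes "j \<notin> K" "finite S" "0 \<le> l1" "0 \<le> l0"
  shows "(l1 + l0) * (\<Prod>i\<in>S. if i = j then l1 / (l1 + l0) else if i \<in> K then 1 else 0)
    = (if S \<subseteq> insert j K then l1 else 0) + (if S \<subseteq> K then l0 else 0)"
proof (cases "j \<in> S")
  case True
  have "(\<Prod>i\<in>S. if i = j then l1 / (l1 + l0) else if i \<in> K then 1 else 0)
     = (l1 / (l1 + l0)) * (\<Prod>i\<in>S - {j}. if i = j then l1 / (l1 + l0) else if i \<in> K then 1 else 0)"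
    using True assms(2) by (simp add: prod.remove)
  also have "(\<Prod>i\<in>S - {j}. if i = j then l1 / (l1 + l0) else if i \<in> K then 1 else 0)
     = (\<Prod>i\<in>S - {j}. if i \<in> K then 1 else 0)" by (intro prod.cong) auto
  also have "\<dots> = (if S - {j} \<subseteq> K then 1 else 0)" using assms(2) by (simp add: ind_prod)
  finally have e: "(\<Prod>i\<in>S. if i = j then l1 / (l1 + l0) else if i \<in> K then 1 else 0)
     = (l1 / (l1 + l0)) * (if S - {j} \<subseteq> K then 1 else 0)" .
  have m: "(l1 + l0) * (l1 / (l1 + l0)) = l1"
  proof (cases "l1 + l0 = 0")
    case True then have "l1 = 0" using assms by simp
    then show ?thesis by simp
  qed simp
  have "S \<subseteq> insert j K \<longleftrightarrow> S - {j} \<subseteq> K" by auto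
  moreover have "\<not> S \<subseteq> K" using True assms(1) by auto
  moreover have "l1 + l0 = 0 \<Longrightarrow> l1 = 0" using assms(3,4) by simp
  ultimately show ?thesis unfolding e using m by (simp add: mult.assoc[symmetric])
next
  case False
  have "(\<Prod>i\<in>S. if i = j then l1 / (l1 + l0) else if i \<in> K then 1 else 0)
     = (\<Prod>i\<in>S. if i \<in> K then 1 else 0)" using False by (intro prod.cong) auto
  also have "\<dots> = (if S \<subseteq> K then 1 else 0)" using assms(2) by (simp add: ind_prod)
  finally show ?thesis using False by (auto simp: subset_insert)
qed

lemma notin_coords:
  "i \<notin> V \<Longrightarrow> Node i \<notin> coords V Lm {j}"
  "e \<notin> edges_complete V \<Longrightarrow> Edge e \<notin> coords V Lm {j}"
  "i \<noteq> j \<Longrightarrow> i \<notin> Lm \<Longrightarrow> Loop i \<notin> coords V Lm {j}"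
  by (simp_all add: coords_def image_iff)

lemma RHS_sub:
  assumes fin: "finite V" and jV: "j \<in> V" and LmV: "Lm \<subseteq> V" and jLm: "j \<notin> Lm"
    and zR: "z \<in> RHS V Lm j"
  shows "z \<in> QP V Lm {j}"
proof -
  obtain a where sup: "supported_on (coords V Lm {j}) z" and ps: "psum V j z a \<le> z (Loop j)"
    and nn: "\<forall>J. J \<subseteq> V \<longrightarrow> ell z a J (V - J) \<ge> 0"
    and ml: "\<forall>i\<in>Lm. z (Loop i) \<le> z (Node i) \<and> 0 \<le> z (Node i) \<and> z (Node i) \<le> 1"
    using zR mem_RHS[OF fin jV] by blast
  have supz: "z c = 0" if "c \<notin> coords V Lm {j}" for c using sup that by (simp add: supported_on_def)
  define X where "X = V - {j}"
  have finX: "finite (Pow X)" using fin by (simp add: X_def)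
  define l1 where "l1 K = ell z a (insert j K) (V - insert j K)" for K
  define l0 where "l0 K = ell z a K (V - K)" for K
  define mu where "mu K = l1 K + l0 K" for K
  have lnn: "0 \<le> l1 K" "0 \<le> l0 K" if "K \<in> Pow X" for K
  proof -
    have "insert j K \<subseteq> V" "K \<subseteq> V" using that jV by (auto simp: X_def)
    then show "0 \<le> l1 K" "0 \<le> l0 K" using nn by (auto simp: l1_def l0_def)
  qed
  have jK: "j \<notin> K" if "K \<in> Pow X" for K using that by (auto simp: X_def)
  define q where "q K i = (if i = j then l1 K / mu K else if i \<in> K then 1 else (0::real))" for K i
  define c0 where "c0 = z (Loop j) - psum V j z a"
  have c0: "0 \<le> c0" using ps by (simp add: c0_def)
  have psum_eq: "psum V j z a = (\<Sum>K\<in>Pow X. pf (l1 K) (mu K))"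
    by (simp add: psum_def X_def l1_def l0_def mu_def)
  define p where "p K = (\<lambda>co. case co of Node i \<Rightarrow> if i \<in> V then q K i else 0
     | Edge e \<Rightarrow> if e \<in> edges_complete V then (\<Prod>i\<in>e. q K i) else 0
     | Loop i \<Rightarrow> if i = j then (q K j)\<^sup>2 + c0 else if i \<in> Lm then q K i - (z (Node i) - z (Loop i)) else 0)" for K
  define Gs where "Gs = {z. supported_on (coords V Lm {j}) z
       \<and> (\<forall>i\<in>{j}. z (Loop i) \<ge> (z (Node i))\<^sup>2)
       \<and> (\<forall>i\<in>Lm. z (Loop i) \<le> (z (Node i))\<^sup>2)
       \<and> (\<forall>e\<in>edges_complete V. \<forall>k l. e = {k, l} \<longrightarrow> z (Edge e) = z (Node k) * z (Node l))
       \<and> (\<forall>i\<in>V. 0 \<le> z (Node i) \<and> z (Node i) \<le> 1)}"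
  have QPd: "QP V Lm {j} = convex hull Gs" by (simp add: QP_def Gs_def)
  have q01: "0 \<le> q K i \<and> q K i \<le> 1" if K: "K \<in> Pow X" for K i
  proof (cases "i = j")
    case True
    show ?thesis
    proof (cases "mu K = 0")
      case False
      then have "mu K > 0" using lnn[OF K] by (simp add: mu_def)
      then show ?thesis using True lnn[OF K] by (simp add: q_def mu_def)
    qed (simp add: q_def True)
  qed (simp add: q_def)
  have qbin: "q K i = 0 \<or> q K i = 1" if "i \<noteq> j" for K i using that by (simp add: q_def)
  have pG: "p K \<in> Gs" if K: "K \<in> Pow X" for K
    unfolding Gs_def
  proof (intro CollectI conjI ballI allI impI)
    show "supported_on (coords V Lm {j}) (p K)"
      unfolding supported_on_def
    proof (intro allI impI)
      fix c assume "c \<notin> coords V Lm {j}"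
      then show "p K c = 0" by (cases c) (auto simp: coords_def p_def)
    qed
  next
    fix i assume "i \<in> {j}"
    then show "(p K (Node i))\<^sup>2 \<le> p K (Loop i)" using jV c0 by (simp add: p_def)
  next
    fix i assume i: "i \<in> Lm"
    then have ij: "i \<noteq> j" "i \<in> V" using jLm LmV by auto
    have "(q K i)\<^sup>2 = q K i" using qbin[OF ij(1), of K] by (auto simp: power2_eq_square)
    then show "p K (Loop i) \<le> (p K (Node i))\<^sup>2" using ml i ij by (simp add: p_def)
  next
    fix e k l assume e: "e \<in> edges_complete V" and ekl: "e = {k, l}"
    then have "k \<noteq> l" "k \<in> V" "l \<in> V" by (auto simp: edges_complete_def)
    then show "p K (Edge e) = p K (Node k) * p K (Node l)" using e ekl by (simp add: p_def)
  next
    fix i assume "i \<in> V"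
    then show "0 \<le> p K (Node i)" "p K (Node i) \<le> 1" using q01[OF K] by (auto simp: p_def)
  qed
  have key: "zS z a S = (\<Sum>K\<in>Pow X. mu K * (\<Prod>i\<in>S. q K i))" if S: "S \<subseteq> V" for S
  proof -
    have "zS z a S = (\<Sum>K\<in>Pow X. (if S \<subseteq> insert j K then l1 K else 0) + (if S \<subseteq> K then l0 K else 0))"
      unfolding X_def l1_def l0_def using mob_split[OF fin jV S, of z a] by simp
    also have "\<dots> = (\<Sum>K\<in>Pow X. mu K * (\<Prod>i\<in>S. q K i))"
    proof (intro sum.cong refl)
      fix K assume K: "K \<in> Pow X"
      have fS: "finite S" using S fin finite_subset by auto
      show "(if S \<subseteq> insert j K then l1 K else 0) + (if S \<subseteq> K then l0 K else 0) = mu K * (\<Prod>i\<in>S. q K i)"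
        unfolding q_def mu_def by (rule prod_q[OF jK[OF K] fS lnn[OF K], symmetric])
    qed
    finally show ?thesis .
  qed
  have sum_mu: "(\<Sum>K\<in>Pow X. mu K) = 1" using key[of "{}"] by (simp add: zS_def)
  have mu_nn: "0 \<le> mu K" if "K \<in> Pow X" for K using lnn[OF that] by (simp add: mu_def)
  have node: "z (Node i) = (\<Sum>K\<in>Pow X. mu K * q K i)" if "i \<in> V" for i
    using key[of "{i}"] that by (simp add: zS_def)
  have zeq: "z = (\<Sum>K\<in>Pow X. mu K *\<^sub>R p K)"
  proof (rule ext)
    fix co
    have r: "(\<Sum>K\<in>Pow X. mu K *\<^sub>R p K) co = (\<Sum>K\<in>Pow X. mu K * p K co)"
      using finX by (simp add: sum_fun_apply scaleR_fun_def)
    show "z co = (\<Sum>K\<in>Pow X. mu K *\<^sub>R p K) co"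
      unfolding r
    proof (cases co)
      case (Node i)
      show "z co = (\<Sum>K\<in>Pow X. mu K * p K co)"
      proof (cases "i \<in> V")
        case True then show ?thesis using node[OF True] by (simp add: Node p_def)
      next
        case False
        have "z co = 0" unfolding Node by (rule supz[OF notin_coords(1)[OF False]])
        then show ?thesis using False by (simp add: Node p_def)
      qed
    next
      case (Edge e)
      show "z co = (\<Sum>K\<in>Pow X. mu K * p K co)"
      proof (cases "e \<in> edges_complete V")
        case True
        then have "e \<subseteq> V" "card e = 2" by (auto simp: edges_complete_def)
        then have "z (Edge e) = zS z a e" by (auto simp: zS_def)
        then show ?thesis using key[OF \<open>e \<subseteq> V\<close>] True by (simp add: Edge p_def)
      next
        case False
        have "z co = 0" unfolding Edge by (rule supz[OF notin_coords(2)[OF False]])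
        then show ?thesis using False by (simp add: Edge p_def)
      qed
    next
      case (Loop i)
      show "z co = (\<Sum>K\<in>Pow X. mu K * p K co)"
      proof (cases "i = j")
        case True
        have "(\<Sum>K\<in>Pow X. mu K * p K co) = (\<Sum>K\<in>Pow X. mu K * (q K j)\<^sup>2 + c0 * mu K)"
          by (simp add: Loop True p_def algebra_simps)
        also have "\<dots> = (\<Sum>K\<in>Pow X. pf (l1 K) (mu K)) + c0"
        proof -
          have "mu K * (q K j)\<^sup>2 = pf (l1 K) (mu K)" if "K \<in> Pow X" for K
            using mu_nn[OF that] by (auto simp: q_def pf_def power2_eq_square)
          then show ?thesis by (simp add: sum.distrib sum_distrib_left[symmetric] sum_mu)
        qed
        also have "\<dots> = z co" by (simp add: psum_eq[symmetric] c0_def Loop True)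
        finally show ?thesis by simp
      next
        case False
        show ?thesis
        proof (cases "i \<in> Lm")
          case True
          then have iV: "i \<in> V" using LmV by auto
          have "(\<Sum>K\<in>Pow X. mu K * p K co) = (\<Sum>K\<in>Pow X. mu K * q K i - (z (Node i) - z (Loop i)) * mu K)"
            using False True by (simp add: Loop p_def algebra_simps)
          also have "\<dots> = z (Node i) - (z (Node i) - z (Loop i))"
            by (simp add: sum_subtractf sum_distrib_left[symmetric] sum_mu node[OF iV])
          finally show ?thesis by (simp add: Loop)
        next
          case F2: False
          have "z co = 0" unfolding Loop by (rule supz[OF notin_coords(3)[OF False F2]])
          then show ?thesis using False F2 by (simp add: Loop p_def)
        qed
      qed
    qed
  qed
  have "(\<Sum>K\<in>Pow X. mu K *\<^sub>R p K) \<in> convex hull Gs"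
    by (rule convex_sum[OF finX convex_convex_hull sum_mu]) (erule mu_nn, rule hull_inc, erule pG)
  then show ?thesis using QPd zeq by simp
qed

theorem corollary3:
  fixes V Lm :: "'a set" and j :: 'a
  assumes "finite V" and "j \<in> V" and "Lm \<subseteq> V" and "j \<notin> Lm"
  shows "QP V Lm {j} =
    {z. supported_on (coords V Lm {j}) z \<and>
        (\<exists>a :: 'a set \<Rightarrow> real.
           ereal (z (Loop j)) \<ge>
             (\<Sum>J\<in>{J. J \<subseteq> V \<and> j \<in> J}. persp (ell z a J (V - J)) (ell z a (J - {j}) (V - J)))
         \<and> (\<forall>J. J \<subseteq> V \<longrightarrow> ell z a J (V - J) \<ge> 0)
         \<and> (\<forall>i\<in>Lm. z (Loop i) \<le> z (Node i) \<and> 0 \<le> z (Node i) \<and> z (Node i) \<le> 1))}"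
proof -
  have "QP V Lm {j} \<subseteq> RHS V Lm j"
    unfolding QP_def
  proof (rule hull_minimal[where S=convex], rule subsetI)
    fix x assume "x \<in> {z. supported_on (coords V Lm {j}) z
       \<and> (\<forall>i\<in>{j}. z (Loop i) \<ge> (z (Node i))\<^sup>2)
       \<and> (\<forall>i\<in>Lm. z (Loop i) \<le> (z (Node i))\<^sup>2)
       \<and> (\<forall>e\<in>edges_complete V. \<forall>k l. e = {k, l} \<longrightarrow> z (Edge e) = z (Node k) * z (Node l))
       \<and> (\<forall>i\<in>V. 0 \<le> z (Node i) \<and> z (Node i) \<le> 1)}"
    then show "x \<in> RHS V Lm j" using gen_RHS[OF assms(1,2,3)] by blast
  next
    show "convex (RHS V Lm j)" by (rule RHS_convex[OF assms(1,2)])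
  qed
  moreover have "RHS V Lm j \<subseteq> QP V Lm {j}" using RHS_sub[OF assms] by blast
  ultimately show ?thesis unfolding RHS_def by blast
qed

end
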